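(* Let $f:\mathbb{R}^n\to\mathbb{R}$ be twice continuously differentiable with Lipschitz continuous Hessian $\nabla^2 f$, let $x\in\mathbb{R}^n$ with $\nabla^2 f(x)$ invertible, and let $y^1,\dots,y^p\in\mathbb{R}^n$ with $p\ge n$. Set $z^\ell=\nabla^2 f(x)(y^\ell-x)$, $\Delta_y=\max_{1\le\ell\le p}\|y^\ell-x\|$, $\Delta_z=\max_{1\le\ell\le p}\|z^\ell\|$, and let $M_L^z$ be the $p\times n$ matrix with rows $(1/\Delta_z)(z^\ell)^\top$, $\ell=1,\dots,p$. Suppose $M_L^z$ has full column rank, and let $\Lambda_z$ be a bound on the norm of the left inverse of $M_L^z$. If $d^N\in\mathbb{R}^n$ satisfies $$(z^\ell)^\top d^N=-f(y^\ell)+f(x)+\tfrac12 (y^\ell-x)^\top z^\ell,\qquad \ell=1,\dots,p,$$ (in the least-squares sense when $p>n$), then $$\left\|-\nabla^2 f(x)^{-1}\nabla f(x)-d^N\right\|\le \Lambda_z\,\mathcal{O}\!\left(\frac{\Delta_y^3}{\Delta_z}\right),$$ where the multiplicative constant in $\mathcal{O}$ depends on the Lipschitz constant of $\nabla^2 f$.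
   Context: $\mathcal{O}(A)$ denotes a constant times $A$, where the constant is independent of $A$. Norms are Euclidean. *)

theory Defs
  imports "HOL-Analysis.Analysis"
begin

definition left_inverse :: "real^'n^'p \<Rightarrow> real^'p^'n" where
  "left_inverse M = matrix_inv (transpose M ** M) ** transpose M"

definition mat_norm :: "real^'n^'m \<Rightarrow> real" where
  "mat_norm A = onorm (\<lambda>v. A *v v)"

end

theory Submission
  imports Defs
begin

lemma matrix_inv_props:
  fixes A :: "real^'n^'n"
  assumes "invertible A"
  shows "A ** matrix_inv A = mat 1" "matrix_inv A ** A = mat 1"
  using assms unfolding invertible_def matrix_inv_def
  by (metis (mono_tags, lifting) someI_ex)+

lemma mv_scaleR: "(A::real^'n^'m) *v (c *\<^sub>R u) = c *\<^sub>R (A *v u)"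
  by (simp add: vec_eq_iff matrix_vector_mult_def sum_distrib_left algebra_simps)

lemma mat_norm_bound: "norm (A *v v) \<le> mat_norm A * norm v"
  unfolding mat_norm_def by (rule onorm) simp

lemma mat_norm_nonneg: "0 \<le> mat_norm A"
  unfolding mat_norm_def by (rule onorm_pos_le) simp

lemma mat_inner_bound: "\<bar>(A *v u) \<bullet> v\<bar> \<le> mat_norm A * norm u * norm v"
proof -
  have "\<bar>(A *v u) \<bullet> v\<bar> \<le> norm (A *v u) * norm v" by (rule Cauchy_Schwarz_ineq2)
  also have "\<dots> \<le> mat_norm A * norm u * norm v"
    by (intro mult_right_mono mat_norm_bound) simp
  finally show ?thesis .
qed

lemma line_deriv_f:
  fixes g :: "real^'n \<Rightarrow> real^'n" and f :: "real^'n \<Rightarrow> real"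
  assumes "\<forall>u. (f has_derivative (\<lambda>h. g u \<bullet> h)) (at u)"
  shows "((\<lambda>t. f (x + t *\<^sub>R h)) has_real_derivative (g (x + t *\<^sub>R h) \<bullet> h)) (at t)"
proof -
  have d1: "((\<lambda>t. x + t *\<^sub>R h) has_derivative (\<lambda>s. s *\<^sub>R h)) (at t)"
    by (auto intro!: derivative_eq_intros)
  have "((\<lambda>t. f (x + t *\<^sub>R h)) has_derivative (\<lambda>s. g (x + t *\<^sub>R h) \<bullet> (s *\<^sub>R h))) (at t)"
    using has_derivative_compose[OF d1 assms[rule_format, of "x + t *\<^sub>R h"]] by (simp add: o_def)
  then show ?thesis
    unfolding has_field_derivative_def by (rule has_derivative_eq_rhs) (auto simp: fun_eq_iff mult.commute)
qed

lemma line_deriv_g: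
  fixes g :: "real^'n \<Rightarrow> real^'n" and H :: "real^'n \<Rightarrow> real^'n^'n"
  assumes "\<forall>u. (g has_derivative (\<lambda>h. H u *v h)) (at u)"
  shows "((\<lambda>t. g (x + t *\<^sub>R h) \<bullet> v) has_real_derivative ((H (x + t *\<^sub>R h) *v h) \<bullet> v)) (at t)"
proof -
  have d1: "((\<lambda>t. x + t *\<^sub>R h) has_derivative (\<lambda>s. s *\<^sub>R h)) (at t)"
    by (auto intro!: derivative_eq_intros)
  have "((\<lambda>t. g (x + t *\<^sub>R h)) has_derivative (\<lambda>s. H (x + t *\<^sub>R h) *v (s *\<^sub>R h))) (at t)"
    using has_derivative_compose[OF d1 assms[rule_format, of "x + t *\<^sub>R h"]] by (simp add: o_def)
  then have "((\<lambda>t. g (x + t *\<^sub>R h) \<bullet> v) has_derivative (\<lambda>s. (H (x + t *\<^sub>R h) *v (s *\<^sub>R h)) \<bullet> v)) (at t)"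
    by (auto intro!: derivative_eq_intros)
  then show ?thesis
    unfolding has_field_derivative_def by (rule has_derivative_eq_rhs) (auto simp: fun_eq_iff mult.commute mv_scaleR)
qed

lemma grad_taylor:
  fixes g :: "real^'n \<Rightarrow> real^'n" and H :: "real^'n \<Rightarrow> real^'n^'n"
  assumes dg: "\<forall>u. (g has_derivative (\<lambda>h. H u *v h)) (at u)"
    and lip: "\<forall>u v. mat_norm (H u - H v) \<le> L * norm (u - v)"
  shows "\<bar>g (y + k) \<bullet> v - g y \<bullet> v - (H y *v k) \<bullet> v\<bar> \<le> \<bar>L\<bar> * norm k ^ 2 * norm v"
proof -
  define c where "c = (H y *v k) \<bullet> v"
  define \<phi> where "\<phi> = (\<lambda>t. g (y + t *\<^sub>R k) \<bullet> v - t * c)"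
  have der: "(\<phi> has_real_derivative ((H (y + t *\<^sub>R k) *v k) \<bullet> v - c)) (at t)" for t
    unfolding \<phi>_def
    by (intro DERIV_diff line_deriv_g[OF dg]) (auto intro!: derivative_eq_intros)
  obtain \<tau> where tau: "0 < \<tau>" "\<tau> < 1" "\<phi> 1 - \<phi> 0 = (1 - 0) * ((H (y + \<tau> *\<^sub>R k) *v k) \<bullet> v - c)"
    using MVT2[of 0 1 \<phi>, OF _ der] by auto
  have "\<phi> 1 - \<phi> 0 = g (y + k) \<bullet> v - g y \<bullet> v - c" unfolding \<phi>_def by simp
  then have eq: "g (y + k) \<bullet> v - g y \<bullet> v - c = ((H (y + \<tau> *\<^sub>R k) - H y) *v k) \<bullet> v"
    using tau(3) by (simp add: c_def matrix_vector_mult_diff_rdistrib inner_diff_left)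
  have "mat_norm (H (y + \<tau> *\<^sub>R k) - H y) \<le> L * norm (\<tau> *\<^sub>R k)"
    using lip[rule_format, of "y + \<tau> *\<^sub>R k" y] by simp
  also have "\<dots> \<le> \<bar>L\<bar> * norm k"
    using tau(1,2) by (auto intro!: mult_mono mult_left_le_one_le simp: abs_mult)
  finally have mn: "mat_norm (H (y + \<tau> *\<^sub>R k) - H y) \<le> \<bar>L\<bar> * norm k" .
  have "\<bar>((H (y + \<tau> *\<^sub>R k) - H y) *v k) \<bullet> v\<bar> \<le> mat_norm (H (y + \<tau> *\<^sub>R k) - H y) * norm k * norm v"
    by (rule mat_inner_bound)
  also have "\<dots> \<le> (\<bar>L\<bar> * norm k) * norm k * norm v"
    using mn by (intro mult_right_mono) auto
  finally show ?thesis using eq by (simp add: c_def power2_eq_square mult_ac)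
qed

lemma sym_aux:
  fixes f :: "real^'n \<Rightarrow> real" and g :: "real^'n \<Rightarrow> real^'n" and H :: "real^'n \<Rightarrow> real^'n^'n"
  assumes df: "\<forall>u. (f has_derivative (\<lambda>h. g u \<bullet> h)) (at u)"
    and dg: "\<forall>u. (g has_derivative (\<lambda>h. H u *v h)) (at u)"
    and lip: "\<forall>u v. mat_norm (H u - H v) \<le> L * norm (u - v)"
  shows "\<bar>f (x + u + v) - f (x + u) - f (x + v) + f x - (H x *v u) \<bullet> v\<bar>
          \<le> \<bar>L\<bar> * (norm u ^ 2 * norm v + norm u * norm v ^ 2)"
proof -
  define \<phi> where "\<phi> = (\<lambda>t. f ((x + u) + t *\<^sub>R v) - f (x + t *\<^sub>R v))"
  have der: "(\<phi> has_real_derivative (g ((x + u) + t *\<^sub>R v) \<bullet> v - g (x + t *\<^sub>R v) \<bullet> v)) (at t)" for t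
    unfolding \<phi>_def by (intro DERIV_diff line_deriv_f[OF df])
  obtain \<tau> where tau: "0 < \<tau>" "\<tau> < 1"
     "\<phi> 1 - \<phi> 0 = (1 - 0) * (g ((x + u) + \<tau> *\<^sub>R v) \<bullet> v - g (x + \<tau> *\<^sub>R v) \<bullet> v)"
    using MVT2[of 0 1 \<phi>, OF _ der] by auto
  define y where "y = x + \<tau> *\<^sub>R v"
  have h: "x + u + \<tau> *\<^sub>R v = y + u" by (simp add: y_def algebra_simps)
  have e1: "\<phi> 1 - \<phi> 0 = f (x + u + v) - f (x + u) - f (x + v) + f x" by (simp add: \<phi>_def)
  have "f (x + u + v) - f (x + u) - f (x + v) + f x = g (x + u + \<tau> *\<^sub>R v) \<bullet> v - g y \<bullet> v"
    using tau(3) e1 by (simp add: y_def)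
  then have eq: "f (x + u + v) - f (x + u) - f (x + v) + f x = g (y + u) \<bullet> v - g y \<bullet> v"
    by (simp only: h)
  have t1: "\<bar>g (y + u) \<bullet> v - g y \<bullet> v - (H y *v u) \<bullet> v\<bar> \<le> \<bar>L\<bar> * norm u ^ 2 * norm v"
    by (rule grad_taylor[OF dg lip])
  have "mat_norm (H y - H x) \<le> L * norm (\<tau> *\<^sub>R v)"
    using lip[rule_format, of y x] by (simp add: y_def)
  also have "\<dots> \<le> \<bar>L\<bar> * norm v"
    using tau(1,2) by (auto intro!: mult_mono mult_left_le_one_le simp: abs_mult)
  finally have mn: "mat_norm (H y - H x) \<le> \<bar>L\<bar> * norm v" .
  have "\<bar>((H y - H x) *v u) \<bullet> v\<bar> \<le> mat_norm (H y - H x) * norm u * norm v"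
    by (rule mat_inner_bound)
  also have "\<dots> \<le> (\<bar>L\<bar> * norm v) * norm u * norm v"
    using mn by (intro mult_right_mono) auto
  finally have t2: "\<bar>(H y *v u) \<bullet> v - (H x *v u) \<bullet> v\<bar> \<le> \<bar>L\<bar> * (norm u * norm v ^ 2)"
    by (simp add: matrix_vector_mult_diff_rdistrib inner_diff_left power2_eq_square mult_ac)
  show ?thesis unfolding eq using t1 t2 by (simp add: algebra_simps)
qed

lemma zero_if_small:
  fixes d C :: real
  assumes "\<And>e. e > 0 \<Longrightarrow> \<bar>d\<bar> \<le> e * C"
  shows "d = 0"
proof (rule ccontr)
  assume "d \<noteq> 0"
  define e where "e = \<bar>d\<bar> / (2 * (\<bar>C\<bar> + 1))"
  have ep: "e > 0" unfolding e_def using \<open>d \<noteq> 0\<close>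
    by (intro divide_pos_pos) (auto intro: add_nonneg_pos)
  have "e * C \<le> e * \<bar>C\<bar>" using ep by (intro mult_left_mono) auto
  also have "\<dots> < \<bar>d\<bar>"
  proof -
    have q: "\<bar>C\<bar> / (2*(\<bar>C\<bar>+1)) < 1"
      by (subst pos_divide_less_eq) auto
    have "\<bar>d\<bar> * (\<bar>C\<bar> / (2*(\<bar>C\<bar>+1))) < \<bar>d\<bar> * 1"
      using \<open>d \<noteq> 0\<close> q by (intro mult_strict_left_mono) auto
    then show ?thesis by (simp add: e_def)
  qed
  finally show False using assms[OF ep] by simp
qed

lemma hess_sym:
  fixes f :: "real^'n \<Rightarrow> real" and g :: "real^'n \<Rightarrow> real^'n" and H :: "real^'n \<Rightarrow> real^'n^'n"
  assumes df: "\<forall>u. (f has_derivative (\<lambda>h. g u \<bullet> h)) (at u)"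
    and dg: "\<forall>u. (g has_derivative (\<lambda>h. H u *v h)) (at u)"
    and lip: "\<forall>u v. mat_norm (H u - H v) \<le> L * norm (u - v)"
  shows "(H x *v u) \<bullet> v = (H x *v v) \<bullet> u"
proof -
  define K where "K = \<bar>L\<bar> * (norm u ^ 2 * norm v + norm u * norm v ^ 2)"
  have "(H x *v u) \<bullet> v - (H x *v v) \<bullet> u = 0"
  proof (rule zero_if_small[where C = "2 * K"])
    fix e :: real assume e: "e > 0"
    define D where "D = f (x + e *\<^sub>R u + e *\<^sub>R v) - f (x + e *\<^sub>R u) - f (x + e *\<^sub>R v) + f x"
    have a1: "\<bar>D - (H x *v (e *\<^sub>R u)) \<bullet> (e *\<^sub>R v)\<bar> \<le> \<bar>L\<bar> * (norm (e *\<^sub>R u) ^ 2 * norm (e *\<^sub>R v) + norm (e *\<^sub>R u) * norm (e *\<^sub>R v) ^ 2)"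
      unfolding D_def by (rule sym_aux[OF df dg lip])
    have a2: "\<bar>D - (H x *v (e *\<^sub>R v)) \<bullet> (e *\<^sub>R u)\<bar> \<le> \<bar>L\<bar> * (norm (e *\<^sub>R v) ^ 2 * norm (e *\<^sub>R u) + norm (e *\<^sub>R v) * norm (e *\<^sub>R u) ^ 2)"
    proof -
      have xe: "x + e *\<^sub>R v + e *\<^sub>R u = x + e *\<^sub>R u + e *\<^sub>R v" by (simp add: algebra_simps)
      have D2: "D = f (x + e *\<^sub>R v + e *\<^sub>R u) - f (x + e *\<^sub>R v) - f (x + e *\<^sub>R u) + f x"
        unfolding D_def xe by simp
      show ?thesis using sym_aux[OF df dg lip, of x "e *\<^sub>R v" "e *\<^sub>R u"] by (simp only: D2)
    qed
    have r: "\<bar>L\<bar> * (norm (e *\<^sub>R u) ^ 2 * norm (e *\<^sub>R v) + norm (e *\<^sub>R u) * norm (e *\<^sub>R v) ^ 2) = e^3 * K"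
      "\<bar>L\<bar> * (norm (e *\<^sub>R v) ^ 2 * norm (e *\<^sub>R u) + norm (e *\<^sub>R v) * norm (e *\<^sub>R u) ^ 2) = e^3 * K"
      using e by (simp_all add: K_def power2_eq_square power3_eq_cube algebra_simps)
    have s: "(H x *v (e *\<^sub>R u)) \<bullet> (e *\<^sub>R v) = e^2 * ((H x *v u) \<bullet> v)"
      "(H x *v (e *\<^sub>R v)) \<bullet> (e *\<^sub>R u) = e^2 * ((H x *v v) \<bullet> u)"
      by (simp_all add: mv_scaleR power2_eq_square)
    have "\<bar>e^2 * ((H x *v u) \<bullet> v - (H x *v v) \<bullet> u)\<bar> \<le> e^2 * (e * (2 * K))"
      using a1 a2 unfolding r s by (simp add: algebra_simps power3_eq_cube power2_eq_square)
    then have "e^2 * \<bar>(H x *v u) \<bullet> v - (H x *v v) \<bullet> u\<bar> \<le> e^2 * (e * (2 * K))"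
      by (simp add: abs_mult)
    then show "\<bar>(H x *v u) \<bullet> v - (H x *v v) \<bullet> u\<bar> \<le> e * (2 * K)"
      using e by (simp add: mult_le_cancel_left)
  qed
  then show ?thesis by simp
qed

lemma f_taylor:
  fixes f :: "real^'n \<Rightarrow> real" and g :: "real^'n \<Rightarrow> real^'n" and H :: "real^'n \<Rightarrow> real^'n^'n"
  assumes df: "\<forall>u. (f has_derivative (\<lambda>h. g u \<bullet> h)) (at u)"
    and dg: "\<forall>u. (g has_derivative (\<lambda>h. H u *v h)) (at u)"
    and lip: "\<forall>u v. mat_norm (H u - H v) \<le> L * norm (u - v)"
  shows "\<bar>f (x + h) - f x - g x \<bullet> h - (1/2) * ((H x *v h) \<bullet> h)\<bar> \<le> \<bar>L\<bar> * norm h ^ 3"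
proof -
  define c where "c = (H x *v h) \<bullet> h"
  define \<phi> where "\<phi> = (\<lambda>t. f (x + t *\<^sub>R h) - t * (g x \<bullet> h) - (1/2) * (t^2 * c))"
  have der: "(\<phi> has_real_derivative (g (x + t *\<^sub>R h) \<bullet> h - g x \<bullet> h - t * c)) (at t)" for t
    unfolding \<phi>_def
    by (intro DERIV_diff line_deriv_f[OF df]) (auto intro!: derivative_eq_intros)
  obtain \<tau> where tau: "0 < \<tau>" "\<tau> < 1"
     "\<phi> 1 - \<phi> 0 = (1 - 0) * (g (x + \<tau> *\<^sub>R h) \<bullet> h - g x \<bullet> h - \<tau> * c)"
    using MVT2[of 0 1 \<phi>, OF _ der] by auto
  have eq: "f (x + h) - f x - g x \<bullet> h - (1/2) * c = g (x + \<tau> *\<^sub>R h) \<bullet> h - g x \<bullet> h - \<tau> * c"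
    using tau(3) by (simp add: \<phi>_def)
  have t1: "\<bar>g (x + \<tau> *\<^sub>R h) \<bullet> h - g x \<bullet> h - (H x *v (\<tau> *\<^sub>R h)) \<bullet> h\<bar> \<le> \<bar>L\<bar> * norm (\<tau> *\<^sub>R h) ^ 2 * norm h"
    by (rule grad_taylor[OF dg lip])
  have "(H x *v (\<tau> *\<^sub>R h)) \<bullet> h = \<tau> * c" by (simp add: c_def mv_scaleR)
  moreover have "\<bar>L\<bar> * norm (\<tau> *\<^sub>R h) ^ 2 * norm h \<le> \<bar>L\<bar> * norm h ^ 3"
  proof -
    have "\<tau>^2 \<le> 1" using tau by (simp add: power_le_one)
    then have "\<tau>^2 * norm h ^ 3 \<le> norm h ^ 3" by (simp add: mult_left_le_one_le)
    have n: "norm (\<tau> *\<^sub>R h) ^ 2 * norm h = \<tau>^2 * norm h ^ 3"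
      using tau by (simp add: power2_eq_square power3_eq_cube)
    have n2: "\<bar>L\<bar> * norm (\<tau> *\<^sub>R h) ^ 2 * norm h = \<bar>L\<bar> * (\<tau>^2 * norm h ^ 3)"
      by (simp only: mult.assoc n)
    show ?thesis using mult_left_mono[OF \<open>\<tau>^2 * norm h ^ 3 \<le> norm h ^ 3\<close>, of "\<bar>L\<bar>"] n2
      by linarith
  qed
  ultimately show ?thesis using t1 eq by (simp add: c_def)
qed

lemma inner_transpose: "(x::real^'n) \<bullet> (transpose M *v w) = (M *v x) \<bullet> (w::real^'p)"
  by (simp add: inner_vec_def matrix_vector_mult_def transpose_def sum_distrib_left sum_distrib_right mult_ac sum.swap[of _ "UNIV::'n set"])

lemma left_inv_M:
  fixes M :: "real^'n^'p"
  assumes "rank M = CARD('n)"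
  shows "left_inverse M ** M = mat 1"
proof -
  have inj: "inj ((*v) M)" using assms full_rank_injective by blast
  have ker: "x = 0" if "(transpose M ** M) *v x = 0" for x
  proof -
    have "(M *v x) \<bullet> (M *v x) = x \<bullet> (transpose M *v (M *v x))" by (rule inner_transpose[symmetric])
    also have "\<dots> = 0" using that by (simp add: matrix_vector_mul_assoc)
    finally have "M *v x = 0" by simp
    then have "M *v x = M *v 0" by simp
    then show ?thesis using inj unfolding inj_def by blast
  qed
  have "invertible (transpose M ** M)"
    using ker matrix_left_invertible_ker invertible_left_inverse by blast
  then have "matrix_inv (transpose M ** M) ** (transpose M ** M) = mat 1"
    by (rule matrix_inv_props)
  then show ?thesis unfolding left_inverse_def by (simp add: matrix_mul_assoc)
qed

lemma Zrow: "(((\<chi> l. z l) :: real^'n^'p) *v w) $ l = z l \<bullet> w"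
  by (simp add: matrix_vector_mult_def inner_vec_def mult_ac)

theorem theorem4:
  fixes L :: real
  assumes "CARD('p) \<ge> CARD('n)"
  shows "\<exists>C::real. \<forall>(f :: real^'n \<Rightarrow> real) (g :: real^'n \<Rightarrow> real^'n)
            (H :: real^'n \<Rightarrow> real^'n^'n) (x :: real^'n) (y :: 'p \<Rightarrow> real^'n)
            (\<Lambda>z :: real) (dN :: real^'n).
     (\<forall>u. (f has_derivative (\<lambda>h. g u \<bullet> h)) (at u)) \<longrightarrow>
     (\<forall>u. (g has_derivative (\<lambda>h. H u *v h)) (at u)) \<longrightarrow>
     continuous_on UNIV H \<longrightarrow>
     (\<forall>u v. mat_norm (H u - H v) \<le> L * norm (u - v)) \<longrightarrow>
     invertible (H x) \<longrightarrow>
     (let z = (\<lambda>l. H x *v (y l - x));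
          \<Delta>y = Max ((\<lambda>l. norm (y l - x)) ` UNIV);
          \<Delta>z = Max ((\<lambda>l. norm (z l)) ` UNIV);
          M = (\<chi> l. (1 / \<Delta>z) *\<^sub>R z l) :: real^'n^'p;
          Z = (\<chi> l. z l) :: real^'n^'p;
          b = (\<chi> l. - f (y l) + f x + (1/2) * ((y l - x) \<bullet> z l)) :: real^'p
      in rank M = CARD('n) \<and>
         mat_norm (left_inverse M) \<le> \<Lambda>z \<and>
         (\<forall>d. norm (Z *v dN - b) \<le> norm (Z *v d - b))
         \<longrightarrow> norm (- (matrix_inv (H x) *v g x) - dN) \<le> \<Lambda>z * (C * \<Delta>y ^ 3 / \<Delta>z))"
proof (rule exI[of _ "2 * real CARD('p) * \<bar>L\<bar>"], intro allI impI)
  fix f :: "real^'n \<Rightarrow> real" and g :: "real^'n \<Rightarrow> real^'n" and H :: "real^'n \<Rightarrow> real^'n^'n"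
    and x :: "real^'n" and y :: "'p \<Rightarrow> real^'n" and \<Lambda>z :: real and dN :: "real^'n"
  assume df: "\<forall>u. (f has_derivative (\<lambda>h. g u \<bullet> h)) (at u)"
    and dg: "\<forall>u. (g has_derivative (\<lambda>h. H u *v h)) (at u)"
    and cH: "continuous_on UNIV H"
    and lip: "\<forall>u v. mat_norm (H u - H v) \<le> L * norm (u - v)"
    and inv: "invertible (H x)"
  define z where "z = (\<lambda>l. H x *v (y l - x))"
  define \<Delta>y where "\<Delta>y = Max ((\<lambda>l. norm (y l - x)) ` UNIV)"
  define \<Delta>z where "\<Delta>z = Max ((\<lambda>l. norm (z l)) ` UNIV)"
  define M where "M = ((\<chi> l. (1 / \<Delta>z) *\<^sub>R z l) :: real^'n^'p)"
  define Z where "Z = ((\<chi> l. z l) :: real^'n^'p)"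
  define b where "b = ((\<chi> l. - f (y l) + f x + (1/2) * ((y l - x) \<bullet> z l)) :: real^'p)"
  define C where "C = 2 * real CARD('p) * \<bar>L\<bar>"
  have main: "rank M = CARD('n) \<and> mat_norm (left_inverse M) \<le> \<Lambda>z \<and>
         (\<forall>d. norm (Z *v dN - b) \<le> norm (Z *v d - b))
         \<longrightarrow> norm (- (matrix_inv (H x) *v g x) - dN) \<le> \<Lambda>z * (C * \<Delta>y ^ 3 / \<Delta>z)"
  proof (intro impI, elim conjE)
    assume rk: "rank M = CARD('n)" and mn: "mat_norm (left_inverse M) \<le> \<Lambda>z"
      and ls: "\<forall>d. norm (Z *v dN - b) \<le> norm (Z *v d - b)"
    have dz0: "\<Delta>z \<ge> 0"
      unfolding \<Delta>z_def by (rule order_trans[OF norm_ge_zero Max_ge[of _ "norm (z undefined)"]]) auto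
    have dzn: "\<Delta>z \<noteq> 0"
    proof
      assume "\<Delta>z = 0"
      then have "M = 0" by (simp add: M_def vec_eq_iff)
      then show False using rk by simp
    qed
    then have dzp: "\<Delta>z > 0" using dz0 by simp
    have ylx: "norm (y l - x) \<le> \<Delta>y" for l unfolding \<Delta>y_def by (rule Max_ge) auto
    have Mv: "M *v w = (1/\<Delta>z) *\<^sub>R (Z *v w)" for w
      by (simp add: M_def Z_def vec_eq_iff matrix_vector_mult_def sum_distrib_left mult_ac)
    define ds where "ds = - (matrix_inv (H x) *v g x)"
    define r where "r = Z *v ds - b"
    have Hg: "H x *v (matrix_inv (H x) *v g x) = g x"
      using matrix_inv_props(1)[OF inv] by (simp add: matrix_vector_mul_assoc)
    have rl: "\<bar>r $ l\<bar> \<le> \<bar>L\<bar> * \<Delta>y ^ 3" for l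
    proof -
      define h where "h = y l - x"
      have zl: "z l = H x *v h" by (simp add: z_def h_def)
      have yl: "y l = x + h" by (simp add: h_def)
      have zd: "(H x *v h) \<bullet> ds = - (g x \<bullet> h)"
        using hess_sym[OF df dg lip, of x h "matrix_inv (H x) *v g x"]
        by (simp add: ds_def Hg inner_commute)
      have "r $ l = z l \<bullet> ds - b $ l" by (simp add: r_def Z_def Zrow)
      also have "\<dots> = f (x + h) - f x - g x \<bullet> h - (1/2) * ((H x *v h) \<bullet> h)"
        unfolding b_def using zd by (simp add: zl yl inner_commute)
      finally have "r $ l = f (x + h) - f x - g x \<bullet> h - (1/2) * ((H x *v h) \<bullet> h)" .
      then have "\<bar>r $ l\<bar> \<le> \<bar>L\<bar> * norm h ^ 3" using f_taylor[OF df dg lip, of x h] by simp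
      also have "\<dots> \<le> \<bar>L\<bar> * \<Delta>y ^ 3"
        using ylx[of l] by (intro mult_left_mono power_mono) (auto simp: h_def)
      finally show ?thesis .
    qed
    have nr: "norm r \<le> real CARD('p) * (\<bar>L\<bar> * \<Delta>y ^ 3)"
    proof -
      have "norm r \<le> (\<Sum>l\<in>UNIV. \<bar>r $ l\<bar>)" by (rule norm_le_l1_cart)
      also have "\<dots> \<le> real CARD('p) * (\<bar>L\<bar> * \<Delta>y ^ 3)"
        using sum_bounded_above[of UNIV "\<lambda>l. \<bar>r $ l\<bar>" "\<bar>L\<bar> * \<Delta>y ^ 3"] rl by simp
      finally show ?thesis .
    qed
    have ne: "norm (Z *v dN - b) \<le> norm r" using ls r_def by simp
    have "ds - dN = left_inverse M *v (M *v (ds - dN))"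
      by (simp add: matrix_vector_mul_assoc left_inv_M[OF rk])
    then have "norm (ds - dN) \<le> mat_norm (left_inverse M) * norm (M *v (ds - dN))"
      by (metis mat_norm_bound)
    also have "\<dots> \<le> \<Lambda>z * norm (M *v (ds - dN))"
      using mn by (intro mult_right_mono) auto
    also have "norm (M *v (ds - dN)) = (1/\<Delta>z) * norm (r - (Z *v dN - b))"
      using dzp by (simp add: Mv r_def matrix_vector_mult_diff_distrib scaleR_diff_right[symmetric])
    also have "\<dots> \<le> (1/\<Delta>z) * (2 * (real CARD('p) * (\<bar>L\<bar> * \<Delta>y ^ 3)))"
    proof -
      have "norm (r - (Z *v dN - b)) \<le> norm r + norm (Z *v dN - b)" by (rule norm_triangle_ineq4)
      then show ?thesis using ne nr dzp by (intro mult_left_mono) auto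
    qed
    also have "(1/\<Delta>z) * (2 * (real CARD('p) * (\<bar>L\<bar> * \<Delta>y ^ 3))) = C * \<Delta>y ^ 3 / \<Delta>z"
      by (simp add: C_def)
    finally have "norm (ds - dN) \<le> \<Lambda>z * (C * \<Delta>y ^ 3 / \<Delta>z)"
      using mn mat_norm_nonneg[of "left_inverse M"] by (simp add: mult_left_mono)
    then show "norm (- (matrix_inv (H x) *v g x) - dN) \<le> \<Lambda>z * (C * \<Delta>y ^ 3 / \<Delta>z)"
      by (simp add: ds_def)
  qed
  then show "let z = (\<lambda>l. H x *v (y l - x));
          \<Delta>y = Max ((\<lambda>l. norm (y l - x)) ` UNIV);
          \<Delta>z = Max ((\<lambda>l. norm (z l)) ` UNIV);
          M = (\<chi> l. (1 / \<Delta>z) *\<^sub>R z l) :: real^'n^'p;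
          Z = (\<chi> l. z l) :: real^'n^'p;
          b = (\<chi> l. - f (y l) + f x + (1/2) * ((y l - x) \<bullet> z l)) :: real^'p
      in rank M = CARD('n) \<and>
         mat_norm (left_inverse M) \<le> \<Lambda>z \<and>
         (\<forall>d. norm (Z *v dN - b) \<le> norm (Z *v d - b))
         \<longrightarrow> norm (- (matrix_inv (H x) *v g x) - dN) \<le> \<Lambda>z * ((2 * real CARD('p) * \<bar>L\<bar>) * \<Delta>y ^ 3 / \<Delta>z)"
    unfolding Let_def using main unfolding C_def M_def Z_def b_def \<Delta>y_def \<Delta>z_def z_def by simp
qed

end
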